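(* Let $r<0$ and $0<y_1<y_2$, and let $p(z)=\prod_{j=1}^2(z-(r+iy_j))(z-(r-iy_j))$. Then $(1/p(n))_{n\in\mathbb Z_+}$ is not a Hausdorff moment sequence.
   Context: A sequence $(x_n)_{n\in\mathbb Z_+}$ of positive numbers is a Hausdorff moment sequence if there is a positive Radon measure $\mu$ on $[0,1]$ with $x_n=\int_0^1 t^n\,d\mu(t)$ for all $n\in\mathbb Z_+$. *)

theory Defs
  imports "HOL-Analysis.Analysis"
begin

text \<open>A sequence of positive reals is a Hausdorff moment sequence if there is a
  positive finite (= Radon, since [0,1] is compact metric) Borel measure mu on [0,1]
  with x n = integral of t^n d mu for all n.\<close>

definition hausdorff_moment_seq :: "(nat \<Rightarrow> real) \<Rightarrow> bool" where
  "hausdorff_moment_seq x \<longleftrightarrow>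
     (\<forall>n. x n > 0) \<and>
     (\<exists>\<mu> :: real measure.
        sets \<mu> = sets (restrict_space borel {0..1}) \<and>
        finite_measure \<mu> \<and>
        (\<forall>n. integrable \<mu> (\<lambda>t. t ^ n) \<and> x n = (\<integral>t. t ^ n \<partial>\<mu>)))"

end

theory Submission imports Defs "HOL-Probability.Sinc_Integral" begin

lemma lapl_sin_int:
  fixes s y :: real assumes s: "0 < s"
  shows "set_integrable lborel {0<..} (\<lambda>u. exp (-(s*u)) * sin (y*u))"
proof -
  have "set_integrable lborel {0<..} (\<lambda>x. exp (-(x * s)))"
    using integrable_I0i_exp_mscale[OF s] by simp
  then show ?thesis
    by (rule set_integrable_bound) (auto simp: set_borel_measurable_def abs_mult mult.commute intro!: mult_left_le_one_le)
qed

lemma lapl_sin: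
  fixes s y :: real assumes s: "0 < s"
  shows "(LINT u:{0<..}|lborel. exp (-(s*u)) * sin (y*u)) = y / (s^2 + y^2)"
proof -
  define F where "F = (\<lambda>u. - exp (-(s*u)) * (s * sin (y*u) + y * cos (y*u)) / (s^2+y^2))"
  have pos: "s^2 + y^2 > 0" using s by (simp add: add_pos_nonneg)
  have "(LBINT u=0..\<infinity>. exp (-(s*u)) * sin (y*u)) = 0 - F 0"
  proof (rule interval_integral_FTC_integrable)
    show "(F has_vector_derivative exp (-(s*x)) * sin (y*x)) (at x)" for x
      unfolding F_def using pos
      by (auto intro!: derivative_eq_intros
             simp: has_real_derivative_iff_has_vector_derivative[symmetric] power2_eq_square)
       (simp_all add: field_simps add_nonneg_eq_0_iff)
    show "isCont (\<lambda>x. exp (-(s*x)) * sin (y*x)) x" for x by (auto intro!: continuous_intros)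
    show "set_integrable lborel (einterval 0 \<infinity>) (\<lambda>x. exp (-(s*x)) * sin (y*x))"
    proof -
      have "einterval 0 \<infinity> = {0<..}" by (auto simp: einterval_def zero_ereal_def)
      then show ?thesis using lapl_sin_int[OF s] by simp
    qed
    show "((F \<circ> real_of_ereal) \<longlongrightarrow> F 0) (at_right 0)"
      unfolding zero_ereal_def ereal_tendsto_simps F_def using s by (auto intro!: tendsto_eq_intros)
    have e: "((\<lambda>t. exp (- (s*t))) \<longlongrightarrow> 0) at_top"
      using s by (auto intro!: exp_at_bot[THEN filterlim_compose] filterlim_tendsto_pos_mult_at_top filterlim_ident
             simp: filterlim_uminus_at_bot)
    have "(F \<longlongrightarrow> 0) at_top"
    proof (rule Lim_null_comparison)
      show "\<forall>\<^sub>F x in at_top. norm (F x) \<le> exp (-(s*x)) * ((s + \<bar>y\<bar>) / (s^2+y^2))"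
      proof (intro always_eventually allI)
        fix x
        have "\<bar>s * sin (y*x) + y * cos (y*x)\<bar> \<le> s + \<bar>y\<bar>"
        proof -
          have "\<bar>s * sin (y*x)\<bar> \<le> s" using s by (simp add: abs_mult)
          moreover have "\<bar>y * cos (y*x)\<bar> \<le> \<bar>y\<bar>" unfolding abs_mult using mult_left_mono[OF abs_cos_le_one[of "y*x"], of "\<bar>y\<bar>"] by simp
          ultimately show ?thesis by linarith
        qed
        then show "norm (F x) \<le> exp (-(s*x)) * ((s + \<bar>y\<bar>) / (s^2+y^2))"
          unfolding F_def using pos by (simp add: abs_mult divide_right_mono mult_left_mono)
      qed
      show "((\<lambda>x. exp (-(s*x)) * ((s + \<bar>y\<bar>) / (s^2+y^2))) \<longlongrightarrow> 0) at_top"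
        using tendsto_mult_left_zero[OF e, of "(s + \<bar>y\<bar>) / (s^2+y^2)"] by simp
    qed
    then show "((F \<circ> real_of_ereal) \<longlongrightarrow> 0) (at_left \<infinity>)"
      unfolding ereal_tendsto_simps .
  qed simp
  then show ?thesis using pos by (simp add: interval_lebesgue_integral_0_infty F_def)
qed

definition HH :: "real \<Rightarrow> real \<Rightarrow> real \<Rightarrow> real \<Rightarrow> real" where
  "HH r y1 y2 u = exp (r*u) * (sin (y1*u) / y1 - sin (y2*u) / y2) / (y2^2 - y1^2)"

lemma HH_rep:
  fixes r y1 y2 :: real
  assumes r: "r < 0" and y1: "0 < y1" and y12: "y1 < y2"
  shows "set_integrable lborel {0<..} (\<lambda>u. exp (-u) ^ n * HH r y1 y2 u)"
    and "(LINT u:{0<..}|lborel. exp (-u) ^ n * HH r y1 y2 u)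
          = 1 / (((real n - r)^2 + y1^2) * ((real n - r)^2 + y2^2))"
proof -
  define s where "s = real n - r"
  have s: "0 < s" using r by (simp add: s_def)
  define D where "D = y2^2 - y1^2"
  have D: "0 < D" using y1 y12 by (simp add: D_def power_strict_mono)
  have eq: "exp (-u) ^ n * HH r y1 y2 u =
      (exp (-(s*u)) * sin (y1*u) / y1 - exp (-(s*u)) * sin (y2*u) / y2) / D" for u
  proof -
    have "exp (-u) ^ n * exp (r*u) = exp (-(s*u))"
      by (simp add: exp_of_nat_mult[symmetric] exp_add[symmetric] s_def algebra_simps)
    then have "exp (-u) ^ n * HH r y1 y2 u = exp (-(s*u)) * (sin (y1*u) / y1 - sin (y2*u) / y2) / D"
      unfolding HH_def D_def by (metis (no_types, lifting) mult.assoc times_divide_eq_right)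
    then show ?thesis by (simp add: field_simps)
  qed
  have i1: "set_integrable lborel {0<..} (\<lambda>u. exp (-(s*u)) * sin (y1*u))" using lapl_sin_int[OF s] .
  have i2: "set_integrable lborel {0<..} (\<lambda>u. exp (-(s*u)) * sin (y2*u))" using lapl_sin_int[OF s] .
  have I: "set_integrable lborel {0<..} (\<lambda>u. (exp (-(s*u)) * sin (y1*u) / y1 - exp (-(s*u)) * sin (y2*u) / y2) / D)"
    using i1 i2 by (intro set_integrable_divide set_integral_diff) auto
  then show "set_integrable lborel {0<..} (\<lambda>u. exp (-u) ^ n * HH r y1 y2 u)"
    unfolding eq .
  have "(LINT u:{0<..}|lborel. exp (-u) ^ n * HH r y1 y2 u)
      = (LINT u:{0<..}|lborel. (exp (-(s*u)) * sin (y1*u) / y1 - exp (-(s*u)) * sin (y2*u) / y2) / D)"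
    unfolding eq ..
  also have "\<dots> = ((y1 / (s^2+y1^2)) / y1 - (y2 / (s^2+y2^2)) / y2) / D"
    using i1 i2 by (simp add: set_integral_diff lapl_sin[OF s])
  also have "\<dots> = 1 / ((s^2 + y1^2) * (s^2 + y2^2))"
  proof -
    have p1: "s^2 + y1^2 > 0" "s^2 + y2^2 > 0" using s by (auto intro: add_pos_nonneg)
    have "(y1 / (s^2+y1^2)) / y1 = 1 / (s^2+y1^2)" "(y2 / (s^2+y2^2)) / y2 = 1 / (s^2+y2^2)"
      using y1 y12 by auto
    moreover have "1 / (s^2+y1^2) - 1 / (s^2+y2^2) = D / ((s^2 + y1^2) * (s^2 + y2^2))"
    proof -
      have gen: "1 / A - 1 / B = (B - A) / (A * B)" if "A > 0" "B > 0" for A B :: real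
        using that by (simp add: field_simps)
      show ?thesis using gen[OF p1] unfolding D_def by simp
    qed
    ultimately show ?thesis using D by simp
  qed
  finally show "(LINT u:{0<..}|lborel. exp (-u) ^ n * HH r y1 y2 u)
          = 1 / (((real n - r)^2 + y1^2) * ((real n - r)^2 + y2^2))" by (simp add: s_def)
qed

lemma HH_poly_rep:
  fixes r y1 y2 :: real
  assumes r: "r < 0" and y1: "0 < y1" and y12: "y1 < y2"
  shows "set_integrable lborel {0<..} (\<lambda>u. (\<Sum>i\<le>m. b i * exp (-u) ^ i) * HH r y1 y2 u)"
    and "(LINT u:{0<..}|lborel. (\<Sum>i\<le>m. b i * exp (-u) ^ i) * HH r y1 y2 u)
          = (\<Sum>i\<le>m. b i * (1 / (((real i - r)^2 + y1^2) * ((real i - r)^2 + y2^2))))"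
proof -
  have eq: "(\<lambda>u. indicator {0<..} u *\<^sub>R ((\<Sum>i\<le>m. b i * exp (-u) ^ i) * HH r y1 y2 u))
     = (\<lambda>u. \<Sum>i\<le>m. b i * (indicator {0<..} u *\<^sub>R (exp (-u) ^ i * HH r y1 y2 u)))"
    by (auto simp: sum_distrib_right sum_distrib_left algebra_simps)
  have ii: "integrable lborel (\<lambda>u. indicator {0<..} u *\<^sub>R (exp (-u) ^ i * HH r y1 y2 u))" for i
    using HH_rep(1)[OF assms, of i] unfolding set_integrable_def .
  show "set_integrable lborel {0<..} (\<lambda>u. (\<Sum>i\<le>m. b i * exp (-u) ^ i) * HH r y1 y2 u)"
    unfolding set_integrable_def eq using ii by auto
  show "(LINT u:{0<..}|lborel. (\<Sum>i\<le>m. b i * exp (-u) ^ i) * HH r y1 y2 u)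
          = (\<Sum>i\<le>m. b i * (1 / (((real i - r)^2 + y1^2) * ((real i - r)^2 + y2^2))))"
    unfolding set_lebesgue_integral_def eq using ii
    by (simp add: HH_rep(2)[OF assms, symmetric] set_lebesgue_integral_def)
qed

lemma HH_neg_test:
  fixes r y1 y2 :: real
  assumes r: "r < 0" and y1: "0 < y1" and y12: "y1 < y2"
  shows "\<exists>b m. (\<forall>t\<in>{0..1}. 0 \<le> (\<Sum>i\<le>m. b i * t ^ i)) \<and>
     (LINT u:{0<..}|lborel. (\<Sum>i\<le>m. b i * exp (-u) ^ i) * HH r y1 y2 u) < 0"
proof -
  define H where "H = HH r y1 y2"
  define D where "D = y2^2 - y1^2"
  have D: "0 < D" using y1 y12 by (simp add: D_def power_strict_mono)
  define u0 where "u0 = 3 * pi / (2 * y1)"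
  have u0: "0 < u0" using y1 by (simp add: u0_def)
  have sin1: "sin (y1 * u0) = -1"
  proof -
    have e: "y1 * u0 = pi + pi/2" using y1 by (simp add: u0_def field_simps)
    have "sin (pi + pi/2) = -1" by (simp only: sin_add sin_pi cos_pi sin_pi_half cos_pi_half)
    then show ?thesis unfolding e .
  qed
  define h0 where "h0 = H u0"
  have h0: "h0 < 0"
  proof -
    have "- 1 / y2 \<le> sin (y2*u0) / y2" using y1 y12 divide_right_mono[OF sin_ge_minus_one[of "y2*u0"], of y2] by simp
    moreover have "1 / y2 < 1 / y1" using y1 y12 by (simp add: frac_less2)
    moreover have "sin (y1*u0) / y1 = - 1 / y1" using sin1 by simp
    ultimately have "sin (y1*u0) / y1 - sin (y2*u0) / y2 < 0" by linarith
    then show ?thesis unfolding h0_def H_def HH_def using D D_def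
      by (simp add: divide_neg_pos mult_pos_neg)
  qed
  have cont: "isCont H u0" unfolding H_def HH_def using y1 y12 D unfolding D_def by (auto intro!: continuous_intros)
  obtain d0 where d0: "d0 > 0" and d0H: "\<And>u. u \<noteq> u0 \<and> norm (u - u0) < d0 \<longrightarrow> norm (H u - h0) < - h0 / 2"
    using LIM_D[OF cont[unfolded isCont_def], of "- h0 / 2"] h0 unfolding h0_def by auto
  define d where "d = min d0 u0"
  have d: "0 < d" "d \<le> u0" using d0 u0 by (auto simp: d_def)
  have Hneg: "H u < h0 / 2" if "\<bar>u - u0\<bar> < d" for u
  proof (cases "u = u0")
    case True then show ?thesis using h0 unfolding h0_def by simp
  next
    case False
    then have "norm (H u - h0) < - h0 / 2" using d0H[of u] that by (auto simp: d_def)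
    then show ?thesis by simp
  qed
  define t1 where "t1 = exp (-(u0 + d))"
  define t2 where "t2 = exp (-(u0 - d))"
  define g where "g = (\<lambda>t::real. max 0 (min (t - t1) (t2 - t)))"
  have gcont: "continuous_on {0..1} g" unfolding g_def by (auto intro!: continuous_intros)
  define c where "c = min (exp (-(u0 + d/2)) - t1) (t2 - exp (-(u0 - d/2)))"
  have c: "0 < c" using d unfolding c_def t1_def t2_def by auto
  define J where "J = {u0 - d/2 .. u0 + d/2}"
  define K where "K = - (c * h0 / 2)"
  have K: "0 < K" using c h0 by (simp add: K_def mult_pos_neg)
  have P1: "g (exp (-u)) * H u \<le> - K * indicator J u" for u
  proof (cases "u \<in> J")
    case True
    then have uJ: "u0 - d/2 \<le> u" "u \<le> u0 + d/2" by (auto simp: J_def)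
    have e1: "exp (-(u0 + d/2)) \<le> exp (-u)" and e2: "exp (-u) \<le> exp (-(u0 - d/2))" using uJ by auto
    have "c \<le> min (exp (-u) - t1) (t2 - exp (-u))" unfolding c_def using e1 e2 by (intro min.mono) linarith+
    then have gc: "c \<le> g (exp (-u))" unfolding g_def by (metis max.coboundedI2)
    have Hu: "H u < h0 / 2" using uJ d by (intro Hneg) auto
    have "g (exp (-u)) * H u \<le> c * H u"
      using gc Hu h0 by (intro mult_right_mono_neg) auto
    also have "\<dots> \<le> c * (h0 / 2)" using c Hu by (intro mult_left_mono) auto
    finally show ?thesis using True by (simp add: K_def)
  next
    case False
    show ?thesis
    proof (cases "g (exp (-u)) = 0")
      case True then show ?thesis using False by simp
    next
      case gnz: False
      then have "t1 < exp (-u)" "exp (-u) < t2" unfolding g_def by (auto simp: max_def min_def split: if_splits)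
      then have "\<bar>u - u0\<bar> < d" unfolding t1_def t2_def by auto
      then have "H u < 0" using Hneg h0 by fastforce
      moreover have "g (exp (-u)) \<ge> 0" unfolding g_def by simp
      ultimately show ?thesis using False by (simp add: mult_nonneg_nonpos)
    qed
  qed
  define C where "C = (1/y1 + 1/y2) / D"
  have C: "0 < C" using y1 y12 D unfolding C_def by (intro divide_pos_pos add_pos_pos) auto
  have P2: "\<bar>H u\<bar> \<le> C * exp (r*u)" for u
  proof -
    have "\<bar>sin (y1*u) / y1\<bar> \<le> 1 / y1" using y1 by (simp add: abs_sin_le_one divide_right_mono)
    moreover have "\<bar>sin (y2*u) / y2\<bar> \<le> 1 / y2" using y1 y12 by (simp add: abs_sin_le_one divide_right_mono)
    ultimately have "\<bar>sin (y1*u) / y1 - sin (y2*u) / y2\<bar> \<le> 1/y1 + 1/y2" by linarith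
    then have "\<bar>sin (y1*u) / y1 - sin (y2*u) / y2\<bar> / D \<le> C" unfolding C_def using D
      by (simp add: divide_right_mono)
    then have "exp (r*u) * (\<bar>sin (y1*u) / y1 - sin (y2*u) / y2\<bar> / D) \<le> exp (r*u) * C"
      by (intro mult_left_mono) auto
    then show ?thesis unfolding H_def HH_def D_def using D unfolding D_def
      by (simp add: abs_mult abs_divide mult.commute)
  qed
  define eps where "eps = K * d * (-r) / (4 * C)"
  have eps: "0 < eps" using K d C r unfolding eps_def by (intro divide_pos_pos mult_pos_pos) auto
  obtain q where qpoly: "polynomial_function q" and qapp: "\<forall>t\<in>{0..1}. norm (g t - q t) < eps"
    using Stone_Weierstrass_polynomial_function[OF compact_Icc gcont eps] by blast
  obtain a m where qa: "q = (\<lambda>t. \<Sum>i\<le>m. a i * t ^ i)"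
    using real_polynomial_function_imp_sum qpoly real_polynomial_function_eq by blast
  define b where "b = (\<lambda>i. a i + (if i = 0 then eps else 0))"
  have Qb: "(\<Sum>i\<le>m. b i * t ^ i) = q t + eps" for t
  proof -
    have "(\<Sum>i\<le>m. b i * t ^ i) = (\<Sum>i\<le>m. a i * t ^ i) + (\<Sum>i\<le>m. (if i = 0 then eps else 0) * t ^ i)"
      unfolding b_def by (simp add: distrib_right sum.distrib)
    also have "(\<Sum>i\<le>m. (if i = 0 then eps else 0) * t ^ i) = (\<Sum>i\<le>m. (if i = 0 then eps else 0))"
      by (rule sum.cong) auto
    also have "\<dots> = eps" by simp
    finally show ?thesis unfolding qa by simp
  qed
  have Qpos: "\<forall>t\<in>{0..1}. 0 \<le> (\<Sum>i\<le>m. b i * t ^ i)"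
  proof
    fix t :: real assume t: "t \<in> {0..1}"
    have "0 \<le> g t" unfolding g_def by simp
    moreover have "\<bar>g t - q t\<bar> < eps" using qapp t by auto
    ultimately show "0 \<le> (\<Sum>i\<le>m. b i * t ^ i)" unfolding Qb by linarith
  qed
  define B where "B = (\<lambda>u. - K * indicator J u + 2 * eps * C * exp (r * u))"
  have P3: "(\<Sum>i\<le>m. b i * exp (-u) ^ i) * H u \<le> B u" if u: "u \<in> {0<..}" for u
  proof -
    have e01: "exp (-u) \<in> {0..1}" using u by (simp add: less_imp_le)
    have "\<bar>g (exp (-u)) - q (exp (-u))\<bar> < eps" using qapp e01 by auto
    then have "\<bar>q (exp (-u)) + eps - g (exp (-u))\<bar> \<le> 2 * eps" using eps by linarith
    then have "(q (exp (-u)) + eps - g (exp (-u))) * H u \<le> 2 * eps * (C * exp (r*u))"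
    proof -
      note X = \<open>\<bar>q (exp (-u)) + eps - g (exp (-u))\<bar> \<le> 2 * eps\<close>
      have "\<bar>(q (exp (-u)) + eps - g (exp (-u))) * H u\<bar> \<le> 2 * eps * (C * exp (r*u))"
        unfolding abs_mult using P2[of u] eps X by (intro mult_mono) auto
      then show ?thesis by (meson abs_ge_self order_trans)
    qed
    then have "(q (exp (-u)) + eps) * H u \<le> g (exp (-u)) * H u + 2 * eps * C * exp (r*u)"
      by (simp add: algebra_simps)
    then show ?thesis using P1[of u] unfolding Qb B_def by simp
  qed
  have Jsub: "J \<subseteq> {0<..}" using d u0 by (auto simp: J_def)
  have intJ: "set_integrable lborel {0<..} (\<lambda>u. indicator J u :: real)"
    and valJ: "(LINT u:{0<..}|lborel. (indicator J u :: real)) = d"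
  proof -
    have e: "(\<lambda>u. indicator {0<..} u *\<^sub>R (indicator J u :: real)) = indicator J"
      using Jsub by (auto simp: indicator_def fun_eq_iff)
    show "set_integrable lborel {0<..} (\<lambda>u. indicator J u :: real)"
      unfolding set_integrable_def e unfolding J_def using d by (intro integrable_real_indicator) (auto simp: emeasure_lborel_Icc)
    show "(LINT u:{0<..}|lborel. (indicator J u :: real)) = d"
      unfolding set_lebesgue_integral_def e unfolding J_def using d by simp
  qed
  have intE: "set_integrable lborel {0<..} (\<lambda>u. exp (r*u))"
    and valE: "(LINT u:{0<..}|lborel. exp (r*u)) = 1 / (-r)"
  proof -
    have "set_integrable lborel {0<..} (\<lambda>x. exp (-(x * (-r))))"
      using integrable_I0i_exp_mscale[of "-r"] r by simp
    then show "set_integrable lborel {0<..} (\<lambda>u. exp (r*u))" by (simp add: mult.commute)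
    have "(LBINT x=0..\<infinity>. exp (-(x * (-r)))) = 1 / (-r)"
      using LBINT_I0i_exp_mscale[of "-r"] r by simp
    then show "(LINT u:{0<..}|lborel. exp (r*u)) = 1 / (-r)"
      by (simp add: interval_lebesgue_integral_0_infty mult.commute)
  qed
  have i1: "set_integrable lborel {0<..} (\<lambda>u. (- K) * indicator J u)"
    using intJ by (rule set_integrable_mult_right)
  have i2: "set_integrable lborel {0<..} (\<lambda>u. (2 * eps * C) * exp (r*u))"
    using intE by (rule set_integrable_mult_right)
  have Beq: "B = (\<lambda>u. (- K) * indicator J u + (2 * eps * C) * exp (r*u))"
    unfolding B_def by simp
  have intB: "set_integrable lborel {0<..} B"
    unfolding Beq using i1 i2 by (rule set_integral_add(1))
  have "(LINT u:{0<..}|lborel. B u) = (LINT u:{0<..}|lborel. (- K) * indicator J u) + (LINT u:{0<..}|lborel. (2 * eps * C) * exp (r*u))"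
    unfolding Beq using i1 i2 by (rule set_integral_add(2))
  also have "\<dots> = - K * d + 2 * eps * C * (1 / (-r))"
    unfolding set_integral_mult_right valJ valE by simp
  finally have valB: "(LINT u:{0<..}|lborel. B u) = - K * d + 2 * eps * C * (1 / (-r))" .
  have "(LINT u:{0<..}|lborel. (\<Sum>i\<le>m. b i * exp (-u) ^ i) * H u) \<le> (LINT u:{0<..}|lborel. B u)"
    using HH_poly_rep(1)[OF assms, of b m] intB P3 unfolding H_def by (intro set_integral_mono) auto
  also have "\<dots> = - K * d / 2" unfolding valB eps_def using C r by (simp add: field_simps)
  also have "\<dots> < 0" using K d by simp
  finally show ?thesis using Qpos unfolding H_def by blast
qed

lemma quad_factor:
  fixes x r y :: real
  shows "(complex_of_real x - (complex_of_real r + \<i> * complex_of_real y)) *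
         (complex_of_real x - (complex_of_real r - \<i> * complex_of_real y))
       = complex_of_real ((x - r)^2 + y^2)"
  by (simp add: complex_eq_iff power2_eq_square algebra_simps)

theorem mainTheorem7:
  fixes r y1 y2 :: real
  assumes "r < 0" and "0 < y1" and "y1 < y2"
  defines "p \<equiv> (\<lambda>z::complex.
             (z - (complex_of_real r + \<i> * complex_of_real y1)) * (z - (complex_of_real r - \<i> * complex_of_real y1)) *
             ((z - (complex_of_real r + \<i> * complex_of_real y2)) * (z - (complex_of_real r - \<i> * complex_of_real y2))))"
  shows "\<not> hausdorff_moment_seq (\<lambda>n. Re (1 / p (of_nat n)))"
proof
  define x where "x = (\<lambda>n::nat. 1 / (((real n - r)^2 + y1^2) * ((real n - r)^2 + y2^2)))"
  have px: "(\<lambda>n. Re (1 / p (of_nat n))) = x"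
  proof
    fix n :: nat
    have "p (of_nat n) = complex_of_real (((real n - r)^2 + y1^2) * ((real n - r)^2 + y2^2))"
      unfolding p_def using quad_factor[of "real n" r y1] quad_factor[of "real n" r y2]
      by (metis of_real_mult of_real_of_nat_eq)
    then show "Re (1 / p (of_nat n)) = x n" unfolding x_def
      by (metis Re_complex_of_real of_real_1 of_real_divide)
  qed
  assume "hausdorff_moment_seq (\<lambda>n. Re (1 / p (of_nat n)))"
  then obtain \<mu> :: "real measure" where sets: "sets \<mu> = sets (restrict_space borel {0..1})"
    and fin: "finite_measure \<mu>"
    and mom: "\<And>n. integrable \<mu> (\<lambda>t. t ^ n) \<and> x n = (\<integral>t. t ^ n \<partial>\<mu>)"
    unfolding hausdorff_moment_seq_def px by blast
  have space: "space \<mu> = {0..1}"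
    using sets_eq_imp_space_eq[OF sets] by simp
  obtain b m where Qpos: "\<forall>t\<in>{0..1}. 0 \<le> (\<Sum>i\<le>m. b i * t ^ i)"
    and neg: "(LINT u:{0<..}|lborel. (\<Sum>i\<le>m. b i * exp (-u) ^ i) * HH r y1 y2 u) < 0"
    using HH_neg_test[OF assms(1-3)] by blast
  have "(LINT u:{0<..}|lborel. (\<Sum>i\<le>m. b i * exp (-u) ^ i) * HH r y1 y2 u) = (\<Sum>i\<le>m. b i * x i)"
    unfolding HH_poly_rep(2)[OF assms(1-3)] x_def ..
  also have "\<dots> = (\<Sum>i\<le>m. b i * (\<integral>t. t ^ i \<partial>\<mu>))" using mom by simp
  also have "\<dots> = (\<integral>t. (\<Sum>i\<le>m. b i * t ^ i) \<partial>\<mu>)"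
  proof -
    have "(\<integral>t. (\<Sum>i\<le>m. b i * t ^ i) \<partial>\<mu>) = (\<Sum>i\<le>m. (\<integral>t. b i * t ^ i \<partial>\<mu>))"
    proof -
      have int: "integrable \<mu> (\<lambda>t. b i * t ^ i)" for i using mom by auto
      have "(\<integral>t. (\<Sum>i\<le>m. b i * t ^ i) \<partial>\<mu>) = (\<Sum>i\<le>m. (\<integral>t. b i * t ^ i \<partial>\<mu>))"
        by (rule Bochner_Integration.integral_sum) (use int in auto)
      then show ?thesis by simp
    qed
    then show ?thesis by simp
  qed
  also have "\<dots> \<ge> 0"
    using Qpos space by (intro integral_nonneg_AE AE_I2) auto
  finally show False using neg by simp
qed

end
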